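(* Let $S$ be a reduced affine monoid. Then $c(S)=c'(S)$.
   Context: A monoid is a commutative cancellative semigroup with identity, written multiplicatively; it is affine if it is a finitely generated submonoid of a finitely generated free abelian group, and reduced if the identity is its only invertible element. Let $\mathcal{A}(S)$ be the (finite) set of atoms of $S$. For $\alpha\in\mathbb{N}_0^{\mathcal{A}(S)}$ write $|\alpha|=\sum_{a\in\mathcal{A}(S)}\alpha(a)$ and $a^{\alpha}=\prod_{a\in\mathcal{A}(S)}a^{\alpha(a)}\in S$. Let $M=\{x^{\alpha}=\prod_a x_a^{\alpha(a)}\mid \alpha\in\mathbb{N}_0^{\mathcal{A}(S)}\}$ be the free commutative monoid on indeterminates $x_a$ ($a\in\mathcal{A}(S)$), and let $\sim_S$ be the congruence on $M$ given by $x^{\alpha}\sim_S x^{\gamma}$ iff $a^{\alpha}=a^{\gamma}$ in $S$ (the defining congruence of $S$, viewed as a subset of $M\times M$). For $\alpha,\gamma\in\mathbb{N}_0^{\mathcal{A}(S)}$ let $\gcd(\alpha,\gamma)(a)=\min\{\alpha(a),\gamma(a)\}$ and $d(\alpha,\gamma)=\max\{|\alpha-\gcd(\alpha,\gamma)|,|\gamma-\gcd(\alpha,\gamma)|\}$. We say $\alpha,\gamma$ can be connected by a $d$-chain if there is a sequence $\alpha=\alpha^{(0)},\alpha^{(1)},\dots,\alpha^{(k)}=\gamma$ in $\mathbb{N}_0^{\mathcal{A}(S)}$ with $a^{\alpha^{(j)}}=a^{\alpha^{(j+1)}}$ and $d(\alpha^{(j)},\alpha^{(j+1)})\le d$ for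 all $j$. The catenary degree $c(S)$ is the minimal non-negative integer $d$ such that whenever $a^{\alpha}=a^{\gamma}$, $\alpha$ and $\gamma$ can be connected by a $d$-chain. $c'(S)$ denotes the minimal non-negative integer $d$ such that there exists a subset $\Lambda\subset M\times M$ generating $\sim_S$ as a semigroup congruence with $|\alpha|\le d$ and $|\gamma|\le d$ for all $(x^{\alpha},x^{\gamma})\in\Lambda$. *)

theory Defs
  imports "HOL-Analysis.Finite_Cartesian_Product"
begin

definition nsmul_vec :: "nat \<Rightarrow> int ^ 'n \<Rightarrow> int ^ 'n" where
  "nsmul_vec k v = (\<chi> i. int k * v $ i)"

definition nlincomb :: "(int ^ 'n) set \<Rightarrow> (int ^ 'n \<Rightarrow> nat) \<Rightarrow> int ^ 'n" where
  "nlincomb G k = (\<Sum>g\<in>G. nsmul_vec (k g) g)"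

definition affine_monoid :: "(int ^ 'n) set \<Rightarrow> bool" where
  "affine_monoid S \<longleftrightarrow> (\<exists>G. finite G \<and> G \<subseteq> S \<and> S = {nlincomb G k | k. True})"

definition reduced_monoid :: "(int ^ 'n) set \<Rightarrow> bool" where
  "reduced_monoid S \<longleftrightarrow> (\<forall>x\<in>S. - x \<in> S \<longrightarrow> x = 0)"

text \<open>Atoms: non-units that are not a sum of two non-units (in a reduced monoid the only
  unit is 0).\<close>
definition atoms :: "(int ^ 'n) set \<Rightarrow> (int ^ 'n) set" where
  "atoms S = {a \<in> S. a \<noteq> 0 \<and> (\<forall>b\<in>S. \<forall>c\<in>S. a = b + c \<longrightarrow> b = 0 \<or> c = 0)}"

text \<open>Exponent vectors alpha in N_0^(A(S)), i.e. functions vanishing off the atoms.\<close>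
definition expvecs :: "(int ^ 'n) set \<Rightarrow> (int ^ 'n \<Rightarrow> nat) set" where
  "expvecs S = {\<alpha>. \<forall>x. x \<notin> atoms S \<longrightarrow> \<alpha> x = 0}"

definition evalf :: "(int ^ 'n) set \<Rightarrow> (int ^ 'n \<Rightarrow> nat) \<Rightarrow> int ^ 'n" where
  "evalf S \<alpha> = nlincomb (atoms S) \<alpha>"

definition flen :: "(int ^ 'n) set \<Rightarrow> (int ^ 'n \<Rightarrow> nat) \<Rightarrow> nat" where
  "flen S \<alpha> = (\<Sum>a\<in>atoms S. \<alpha> a)"

definition fgcd :: "('v \<Rightarrow> nat) \<Rightarrow> ('v \<Rightarrow> nat) \<Rightarrow> 'v \<Rightarrow> nat" where
  "fgcd \<alpha> \<gamma> = (\<lambda>a. min (\<alpha> a) (\<gamma> a))"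

definition fdist :: "(int ^ 'n) set \<Rightarrow> (int ^ 'n \<Rightarrow> nat) \<Rightarrow> (int ^ 'n \<Rightarrow> nat) \<Rightarrow> nat" where
  "fdist S \<alpha> \<gamma> = max (flen S (\<lambda>a. \<alpha> a - fgcd \<alpha> \<gamma> a)) (flen S (\<lambda>a. \<gamma> a - fgcd \<alpha> \<gamma> a))"

definition dchain :: "(int ^ 'n) set \<Rightarrow> nat \<Rightarrow> (int ^ 'n \<Rightarrow> nat) \<Rightarrow> (int ^ 'n \<Rightarrow> nat) \<Rightarrow> bool" where
  "dchain S d \<alpha> \<gamma> \<longleftrightarrow> (\<exists>xs. xs \<noteq> [] \<and> hd xs = \<alpha> \<and> last xs = \<gamma> \<and> set xs \<subseteq> expvecs S \<and>
      (\<forall>j. Suc j < length xs \<longrightarrow>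
         evalf S (xs ! j) = evalf S (xs ! Suc j) \<and> fdist S (xs ! j) (xs ! Suc j) \<le> d))"

definition catenary_degree :: "(int ^ 'n) set \<Rightarrow> nat" where
  "catenary_degree S = (LEAST d. \<forall>\<alpha>\<in>expvecs S. \<forall>\<gamma>\<in>expvecs S.
      evalf S \<alpha> = evalf S \<gamma> \<longrightarrow> dchain S d \<alpha> \<gamma>)"

text \<open>The defining congruence sim_S on M (M identified with expvecs S, x^alpha with alpha).\<close>
definition defcong :: "(int ^ 'n) set \<Rightarrow> ((int ^ 'n \<Rightarrow> nat) \<times> (int ^ 'n \<Rightarrow> nat)) set" where
  "defcong S = {(\<alpha>, \<gamma>). \<alpha> \<in> expvecs S \<and> \<gamma> \<in> expvecs S \<and> evalf S \<alpha> = evalf S \<gamma>}"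

definition is_congruence :: "('v \<Rightarrow> nat) set \<Rightarrow> (('v \<Rightarrow> nat) \<times> ('v \<Rightarrow> nat)) set \<Rightarrow> bool" where
  "is_congruence M R \<longleftrightarrow> equiv M R \<and>
     (\<forall>\<alpha> \<gamma> \<beta>. (\<alpha>, \<gamma>) \<in> R \<longrightarrow> \<beta> \<in> M \<longrightarrow> ((\<lambda>a. \<alpha> a + \<beta> a), (\<lambda>a. \<gamma> a + \<beta> a)) \<in> R)"

definition cong_generated :: "('v \<Rightarrow> nat) set \<Rightarrow> (('v \<Rightarrow> nat) \<times> ('v \<Rightarrow> nat)) set
    \<Rightarrow> (('v \<Rightarrow> nat) \<times> ('v \<Rightarrow> nat)) set" where
  "cong_generated M \<Lambda> = \<Inter>{R. is_congruence M R \<and> \<Lambda> \<subseteq> R}"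

definition c_prime :: "(int ^ 'n) set \<Rightarrow> nat" where
  "c_prime S = (LEAST d. \<exists>\<Lambda>. \<Lambda> \<subseteq> expvecs S \<times> expvecs S \<and>
      cong_generated (expvecs S) \<Lambda> = defcong S \<and>
      (\<forall>(\<alpha>, \<gamma>)\<in>\<Lambda>. flen S \<alpha> \<le> d \<and> flen S \<gamma> \<le> d))"

end

theory Submission
  imports Defs
begin

lemma nsmul_add: "nsmul_vec (m+n) v = nsmul_vec m v + nsmul_vec n v"
  by (simp add: nsmul_vec_def vec_eq_iff algebra_simps)

lemma evalf_add: "evalf S (\<lambda>a. \<alpha> a + \<beta> a) = evalf S \<alpha> + evalf S \<beta>"
  by (simp add: evalf_def nlincomb_def nsmul_add sum.distrib)

definition stepE :: "(int ^ 'n) set \<Rightarrow> nat \<Rightarrow> ((int ^ 'n \<Rightarrow> nat) \<times> (int ^ 'n \<Rightarrow> nat)) set" where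
  "stepE S d = {(x,y). x \<in> expvecs S \<and> y \<in> expvecs S \<and> evalf S x = evalf S y \<and> fdist S x y \<le> d}"

lemma list_chain_rtrancl:
  "xs \<noteq> [] \<Longrightarrow> (\<forall>j. Suc j < length xs \<longrightarrow> (xs!j, xs!Suc j) \<in> R) \<Longrightarrow> (hd xs, last xs) \<in> R\<^sup>*"
proof (induction xs)
  case Nil
  then show ?case by simp
next
  case (Cons x xs)
  show ?case
  proof (cases "xs = []")
    case True
    then show ?thesis by simp
  next
    case False
    have h: "(x, hd xs) \<in> R" using Cons.prems(2)[rule_format, of 0] False
      by (simp add: hd_conv_nth)
    have "\<forall>j. Suc j < length xs \<longrightarrow> (xs!j, xs!Suc j) \<in> R"
    proof (intro allI impI)
      fix j assume "Suc j < length xs"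
      then show "(xs!j, xs!Suc j) \<in> R" using Cons.prems(2)[rule_format, of "Suc j"] by simp
    qed
    then have "(hd xs, last xs) \<in> R\<^sup>*" using Cons.IH False by blast
    then show ?thesis using h False by (simp add: converse_rtrancl_into_rtrancl)
  qed
qed

lemma rtrancl_list_chain:
  assumes "(a,b) \<in> R\<^sup>*"
  shows "\<exists>xs. xs \<noteq> [] \<and> hd xs = a \<and> last xs = b \<and> (\<forall>j. Suc j < length xs \<longrightarrow> (xs!j, xs!Suc j) \<in> R)
     \<and> set xs \<subseteq> insert a (Range R)"
  using assms
proof (induction rule: rtrancl_induct)
  case base
  show ?case by (intro exI[of _ "[a]"]) simp
next
  case (step y z)
  then obtain xs where xs: "xs \<noteq> []" "hd xs = a" "last xs = y"
    "\<forall>j. Suc j < length xs \<longrightarrow> (xs!j, xs!Suc j) \<in> R" "set xs \<subseteq> insert a (Range R)" by blast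
  have "\<forall>j. Suc j < length (xs @ [z]) \<longrightarrow> ((xs@[z])!j, (xs@[z])!Suc j) \<in> R"
  proof (intro allI impI)
    fix j assume j: "Suc j < length (xs @ [z])"
    show "((xs@[z])!j, (xs@[z])!Suc j) \<in> R"
    proof (cases "Suc j < length xs")
      case True
      then show ?thesis using xs(4) by (simp add: nth_append)
    next
      case False
      then have "j = length xs - 1" using j by simp
      then have "(xs@[z])!j = y" "(xs@[z])!Suc j = z" using xs(1,3) False j
        by (auto simp add: nth_append last_conv_nth)
      then show ?thesis using step(2) by simp
    qed
  qed
  then show ?case using xs step(2) by (intro exI[of _ "xs @ [z]"]) auto
qed

lemma Range_stepE: "Range (stepE S d) \<subseteq> expvecs S"
  by (auto simp: stepE_def)

lemma dchain_iff: "dchain S d \<alpha> \<gamma> \<longleftrightarrow> \<alpha> \<in> expvecs S \<and> (\<alpha>,\<gamma>) \<in> (stepE S d)\<^sup>*"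
proof
  assume "dchain S d \<alpha> \<gamma>"
  then obtain xs where xs: "xs \<noteq> []" "hd xs = \<alpha>" "last xs = \<gamma>" "set xs \<subseteq> expvecs S"
    "\<forall>j. Suc j < length xs \<longrightarrow>
         evalf S (xs ! j) = evalf S (xs ! Suc j) \<and> fdist S (xs ! j) (xs ! Suc j) \<le> d"
    unfolding dchain_def by blast
  have "\<forall>j. Suc j < length xs \<longrightarrow> (xs!j, xs!Suc j) \<in> stepE S d"
  proof (intro allI impI)
    fix j assume j: "Suc j < length xs"
    have m: "xs!j \<in> expvecs S" "xs!Suc j \<in> expvecs S"
      using j xs(4) nth_mem by (metis Suc_lessD subsetD)+
    have e: "evalf S (xs ! j) = evalf S (xs ! Suc j)" "fdist S (xs ! j) (xs ! Suc j) \<le> d"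
      using xs(5) j by blast+
    show "(xs!j, xs!Suc j) \<in> stepE S d" using m e by (simp add: stepE_def)
  qed
  then have "(hd xs, last xs) \<in> (stepE S d)\<^sup>*" by (rule list_chain_rtrancl[OF xs(1)])
  then have "(\<alpha>,\<gamma>) \<in> (stepE S d)\<^sup>*" using xs(2,3) by simp
  moreover have "\<alpha> \<in> expvecs S" using xs by (metis hd_in_set subsetD)
  ultimately show "\<alpha> \<in> expvecs S \<and> (\<alpha>,\<gamma>) \<in> (stepE S d)\<^sup>*" by blast
next
  assume a: "\<alpha> \<in> expvecs S \<and> (\<alpha>,\<gamma>) \<in> (stepE S d)\<^sup>*"
  then obtain xs where xs: "xs \<noteq> []" "hd xs = \<alpha>" "last xs = \<gamma>"
    "\<forall>j. Suc j < length xs \<longrightarrow> (xs!j, xs!Suc j) \<in> stepE S d" "set xs \<subseteq> insert \<alpha> (Range (stepE S d))"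
    using rtrancl_list_chain[of \<alpha> \<gamma> "stepE S d"] a by blast
  have "set xs \<subseteq> expvecs S" using xs(5) a Range_stepE by blast
  moreover have "\<forall>j. Suc j < length xs \<longrightarrow>
         evalf S (xs ! j) = evalf S (xs ! Suc j) \<and> fdist S (xs ! j) (xs ! Suc j) \<le> d"
    using xs(4) by (simp add: stepE_def)
  ultimately show "dchain S d \<alpha> \<gamma>" unfolding dchain_def using xs(1-3) by blast
qed

lemma fdist_shift: "fdist S (\<lambda>a. x a + b a) (\<lambda>a. y a + b a) = fdist S x y"
proof -
  have 1: "(\<lambda>a. x a + b a - fgcd (\<lambda>a. x a + b a) (\<lambda>a. y a + b a) a) = (\<lambda>a. x a - fgcd x y a)"
    by (auto simp: fun_eq_iff fgcd_def min_def)
  have 2: "(\<lambda>a. y a + b a - fgcd (\<lambda>a. x a + b a) (\<lambda>a. y a + b a) a) = (\<lambda>a. y a - fgcd x y a)"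
    by (auto simp: fun_eq_iff fgcd_def min_def)
  show ?thesis unfolding fdist_def 1 2 ..
qed

lemma fdist_sym: "fdist S x y = fdist S y x"
  unfolding fdist_def fgcd_def by (simp add: min.commute max.commute)

lemma expvecs_add: "x \<in> expvecs S \<Longrightarrow> b \<in> expvecs S \<Longrightarrow> (\<lambda>a. x a + b a) \<in> expvecs S"
  by (simp add: expvecs_def)

lemma stepE_shift: "(x,y) \<in> stepE S d \<Longrightarrow> b \<in> expvecs S \<Longrightarrow>
   ((\<lambda>a. x a + b a), (\<lambda>a. y a + b a)) \<in> stepE S d"
  by (simp add: stepE_def fdist_shift evalf_add expvecs_add)

lemma rtrancl_shift:
  assumes b: "b \<in> expvecs S"
  shows "(x,y) \<in> (stepE S d)\<^sup>* \<Longrightarrow>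
   ((\<lambda>a. x a + b a), (\<lambda>a. y a + b a)) \<in> (stepE S d)\<^sup>*"
proof (induction rule: rtrancl_induct)
  case base
  then show ?case by simp
next
  case (step y z)
  have "((\<lambda>a. y a + b a), (\<lambda>a. z a + b a)) \<in> stepE S d"
    by (rule stepE_shift[OF step(2) b])
  with step(3) show ?case by (rule rtrancl.rtrancl_into_rtrancl)
qed

lemma flen_mono: "(\<And>a. x a \<le> y a) \<Longrightarrow> flen S x \<le> flen S y"
  unfolding flen_def by (simp add: sum_mono)

lemma fdist_le: "fdist S x y \<le> max (flen S x) (flen S y)"
proof -
  have "flen S (\<lambda>a. x a - fgcd x y a) \<le> flen S x" by (rule flen_mono) simp
  moreover have "flen S (\<lambda>a. y a - fgcd x y a) \<le> flen S y" by (rule flen_mono) simp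
  ultimately show ?thesis unfolding fdist_def by (auto simp: max_def)
qed

lemma defcong_cong: "is_congruence (expvecs S) (defcong S)"
  unfolding is_congruence_def equiv_def refl_on_def sym_def trans_def defcong_def
  by (auto simp: evalf_add expvecs_add)

lemma strip_eq: "(\<lambda>a. (x a - fgcd x y a) + fgcd x y a) = x"
  by (auto simp: fun_eq_iff fgcd_def)

lemma fgcd_exp: "x \<in> expvecs S \<Longrightarrow> fgcd x y \<in> expvecs S"
  by (simp add: expvecs_def fgcd_def)

lemma strip_exp: "x \<in> expvecs S \<Longrightarrow> (\<lambda>a. x a - g a) \<in> expvecs S"
  by (simp add: expvecs_def)

lemma strip_evalf:
  assumes "evalf S x = evalf S y"
  shows "evalf S (\<lambda>a. x a - fgcd x y a) = evalf S (\<lambda>a. y a - fgcd x y a)"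
proof -
  have "evalf S x = evalf S (\<lambda>a. x a - fgcd x y a) + evalf S (fgcd x y)"
    using evalf_add[of S "\<lambda>a. x a - fgcd x y a" "fgcd x y"] strip_eq[of x y] by simp
  moreover have "evalf S y = evalf S (\<lambda>a. y a - fgcd x y a) + evalf S (fgcd x y)"
    using evalf_add[of S "\<lambda>a. y a - fgcd x y a" "fgcd x y"] strip_eq[of y x]
    by (simp add: fgcd_def min.commute)
  ultimately show ?thesis using assms by simp
qed

lemma Pc_imp_Pc':
  assumes P: "\<forall>\<alpha>\<in>expvecs S. \<forall>\<gamma>\<in>expvecs S. evalf S \<alpha> = evalf S \<gamma> \<longrightarrow> dchain S d \<alpha> \<gamma>"
  shows "\<exists>\<Lambda>. \<Lambda> \<subseteq> expvecs S \<times> expvecs S \<and>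
      cong_generated (expvecs S) \<Lambda> = defcong S \<and>
      (\<forall>(\<alpha>, \<gamma>)\<in>\<Lambda>. flen S \<alpha> \<le> d \<and> flen S \<gamma> \<le> d)"
proof -
  define \<Lambda> where "\<Lambda> = {((\<lambda>a. x a - fgcd x y a), (\<lambda>a. y a - fgcd x y a)) | x y. (x,y) \<in> stepE S d}"
  have sub: "\<Lambda> \<subseteq> expvecs S \<times> expvecs S"
    unfolding \<Lambda>_def stepE_def by (auto intro: strip_exp)
  have subd: "\<Lambda> \<subseteq> defcong S"
    unfolding \<Lambda>_def stepE_def defcong_def by (auto intro: strip_exp strip_evalf)
  have bnd: "\<forall>(\<alpha>, \<gamma>)\<in>\<Lambda>. flen S \<alpha> \<le> d \<and> flen S \<gamma> \<le> d"
    unfolding \<Lambda>_def stepE_def fdist_def by auto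
  have c1: "cong_generated (expvecs S) \<Lambda> \<subseteq> defcong S"
    unfolding cong_generated_def using defcong_cong subd by blast
  have c2: "defcong S \<subseteq> R" if R: "is_congruence (expvecs S) R" "\<Lambda> \<subseteq> R" for R
  proof
    fix p assume p: "p \<in> defcong S"
    obtain \<alpha> \<gamma> where p': "p = (\<alpha>,\<gamma>)" "\<alpha> \<in> expvecs S" "\<gamma> \<in> expvecs S" "evalf S \<alpha> = evalf S \<gamma>"
      using p unfolding defcong_def by auto
    then have rt: "(\<alpha>,\<gamma>) \<in> (stepE S d)\<^sup>*" using P dchain_iff by blast
    have eq: "equiv (expvecs S) R" using R(1) unfolding is_congruence_def by blast
    have stepR: "(x,y) \<in> R" if xy: "(x,y) \<in> stepE S d" for x y
    proof -
      have "((\<lambda>a. x a - fgcd x y a), (\<lambda>a. y a - fgcd x y a)) \<in> R"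
        using xy R(2) unfolding \<Lambda>_def by blast
      moreover have "fgcd x y \<in> expvecs S" using xy fgcd_exp unfolding stepE_def by blast
      ultimately have "((\<lambda>a. (x a - fgcd x y a) + fgcd x y a), (\<lambda>a. (y a - fgcd x y a) + fgcd x y a)) \<in> R"
        using R(1) unfolding is_congruence_def by blast
      moreover have "(\<lambda>a. (y a - fgcd x y a) + fgcd x y a) = y" by (auto simp: fun_eq_iff fgcd_def)
      ultimately show ?thesis by (simp add: strip_eq)
    qed
    have "(\<alpha>,z) \<in> R" if "(\<alpha>,z) \<in> (stepE S d)\<^sup>*" for z
      using that
    proof (induction rule: rtrancl_induct)
      case base
      then show ?case using eq p'(2) unfolding equiv_def refl_on_def by blast
    next
      case (step y z)
      then show ?case using stepR eq unfolding equiv_def trans_def by blast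
    qed
    then show "p \<in> R" using rt p' by simp
  qed
  have c3: "defcong S \<subseteq> cong_generated (expvecs S) \<Lambda>"
    unfolding cong_generated_def using c2 by blast
  show ?thesis using sub bnd c1 c3 by blast
qed

lemma Pc'_imp_Pc:
  assumes "\<Lambda> \<subseteq> expvecs S \<times> expvecs S" and gen: "cong_generated (expvecs S) \<Lambda> = defcong S"
    and bnd: "\<forall>(\<alpha>, \<gamma>)\<in>\<Lambda>. flen S \<alpha> \<le> d \<and> flen S \<gamma> \<le> d"
  shows "\<forall>\<alpha>\<in>expvecs S. \<forall>\<gamma>\<in>expvecs S. evalf S \<alpha> = evalf S \<gamma> \<longrightarrow> dchain S d \<alpha> \<gamma>"
proof -
  define R where "R = {(\<alpha>,\<gamma>). \<alpha> \<in> expvecs S \<and> (\<alpha>,\<gamma>) \<in> (stepE S d)\<^sup>*}"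
  have rexp: "\<gamma> \<in> expvecs S" if "(\<alpha>,\<gamma>) \<in> (stepE S d)\<^sup>*" "\<alpha> \<in> expvecs S" for \<alpha> \<gamma>
    using that(1,2) by (induction rule: rtrancl_induct) (auto simp: stepE_def)
  have symE: "sym (stepE S d)"
    unfolding sym_def stepE_def by (auto simp: fdist_sym)
  have "sym ((stepE S d)\<^sup>*)" using symE by (rule sym_rtrancl)
  then have eqR: "equiv (expvecs S) R"
    unfolding equiv_def refl_on_def sym_def trans_def R_def using rexp
    by (auto intro: rtrancl_trans)
  have congR: "is_congruence (expvecs S) R"
    unfolding is_congruence_def using eqR
    by (auto simp: R_def intro: rtrancl_shift expvecs_add)
  have "\<Lambda> \<subseteq> cong_generated (expvecs S) \<Lambda>" unfolding cong_generated_def by blast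
  then have "\<Lambda> \<subseteq> defcong S" using gen by simp
  then have "\<Lambda> \<subseteq> stepE S d"
    using bnd fdist_le unfolding defcong_def stepE_def
    by (fastforce intro: le_trans)
  then have "\<Lambda> \<subseteq> R" unfolding R_def by (auto simp: stepE_def)
  then have "cong_generated (expvecs S) \<Lambda> \<subseteq> R"
    unfolding cong_generated_def using congR by blast
  then have "defcong S \<subseteq> R" using gen by simp
  then show ?thesis unfolding defcong_def R_def by (auto simp: dchain_iff)
qed

theorem proposition2p3:
  fixes S :: "(int ^ 'n) set"
  assumes "affine_monoid S" and "reduced_monoid S"
  shows "catenary_degree S = c_prime S"
proof -
  have "(\<lambda>d. \<forall>\<alpha>\<in>expvecs S. \<forall>\<gamma>\<in>expvecs S. evalf S \<alpha> = evalf S \<gamma> \<longrightarrow> dchain S d \<alpha> \<gamma>) =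
        (\<lambda>d. \<exists>\<Lambda>. \<Lambda> \<subseteq> expvecs S \<times> expvecs S \<and>
      cong_generated (expvecs S) \<Lambda> = defcong S \<and>
      (\<forall>(\<alpha>, \<gamma>)\<in>\<Lambda>. flen S \<alpha> \<le> d \<and> flen S \<gamma> \<le> d))"
    using Pc_imp_Pc' Pc'_imp_Pc by (intro ext iffI) (blast, blast)
  then show ?thesis unfolding catenary_degree_def c_prime_def by simp
qed

end
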